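(* Let $N \ge 1$ and let $f_N(t) = \sum_{n=1}^N c_n e^{\alpha_n t}$ with real coefficients $c_n$ and pairwise distinct nonzero real rate constants $\alpha_n$ (no sign condition on $f_N$ is assumed). For $k \ge 0$ let $$I_{(k)}(t) := \int_0^{t}\int_0^{t^{(1)}}\cdots\int_0^{t^{(k)}} f_N(t^{(k+1)})\, dt^{(k+1)} \cdots dt^{(1)}$$ denote the $(k+1)$-fold iterated integral of $f_N$ from $0$. Let $t_1,\dots,t_{2N+1}$ be distinct nonnegative reals. Given $\{f_N(t_i) : i = 1,\dots,2N\}$ and $\{I_{(k)}(t_i) : k = 1,2,\dots,N,\ i = 1,\dots,2N+1\}$, the coefficients $c_n$ and rate constants $\alpha_n$, $n = 1,\dots,N$, are uniquely determined. *)

theory Defs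
  imports "HOL-Analysis.Analysis"
begin

definition expsum :: "nat \<Rightarrow> (nat \<Rightarrow> real) \<Rightarrow> (nat \<Rightarrow> real) \<Rightarrow> real \<Rightarrow> real" where
  "expsum N c \<alpha> t = (\<Sum>n=1..N. c n * exp (\<alpha> n * t))"

fun iter_int :: "nat \<Rightarrow> (real \<Rightarrow> real) \<Rightarrow> real \<Rightarrow> real" where
  "iter_int 0 g t = integral {0..t} g"
| "iter_int (Suc k) g t = integral {0..t} (iter_int k g)"

end

theory Submission imports Defs begin

lemma rolle_many:
  fixes f f' :: "real \<Rightarrow> real"
  assumes der: "\<And>x. (f has_real_derivative f' x) (at x)"
  shows "finite Z \<Longrightarrow> card Z = Suc n \<Longrightarrow> (\<forall>z\<in>Z. f z = 0) \<Longrightarrow>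
    \<exists>Z'. finite Z' \<and> card Z' = n \<and> Z' \<subseteq> {Min Z<..<Max Z} \<and> (\<forall>z\<in>Z'. f' z = 0)"
proof (induction n arbitrary: Z)
  case 0
  then show ?case by auto
next
  case (Suc n)
  define m where "m = Max Z"
  define Z0 where "Z0 = Z - {m}"
  have ne: "Z \<noteq> {}" using Suc.prems by auto
  have mZ: "m \<in> Z" using Suc.prems ne m_def by auto
  have fZ0: "finite Z0" and cZ0: "card Z0 = Suc n" using Suc.prems mZ by (auto simp: Z0_def)
  have ne0: "Z0 \<noteq> {}" using cZ0 by auto
  obtain Z' where Z': "finite Z'" "card Z' = n" "Z' \<subseteq> {Min Z0<..<Max Z0}" "\<forall>z\<in>Z'. f' z = 0"
    using Suc.IH[OF fZ0 cZ0] Suc.prems(3) by (auto simp: Z0_def)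
  have a0: "Max Z0 \<in> Z0" using fZ0 ne0 by simp
  have lt: "Max Z0 < m"
    using a0 Suc.prems(1) m_def Z0_def by (metis DiffD1 DiffD2 Max_ge insertI1 order_le_neq_trans)
  have cont: "continuous_on {Max Z0..m} f"
    using der by (meson DERIV_isCont continuous_at_imp_continuous_on)
  have fa: "f (Max Z0) = f m" using a0 mZ Suc.prems(3) by (auto simp: Z0_def)
  have d2: "\<And>x. (f has_derivative (\<lambda>v. f' x * v)) (at x)"
    using der unfolding has_field_derivative_def by simp
  obtain \<xi> where xi: "Max Z0 < \<xi>" "\<xi> < m" "(\<lambda>v. f' \<xi> * v) = (\<lambda>v. 0)"
    using Rolle_deriv[OF lt fa cont, of "\<lambda>x v. f' x * v"] d2 by blast
  have fxi: "f' \<xi> = 0" using fun_cong[OF xi(3), of 1] by simp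
  have minle: "Min Z \<le> Min Z0" using Suc.prems(1) ne0 by (simp add: Z0_def Min_antimono)
  show ?case
  proof (intro exI[of _ "insert \<xi> Z'"] conjI)
    show "finite (insert \<xi> Z')" using Z' by simp
    have "\<xi> \<notin> Z'" using Z'(3) xi(1) by auto
    then show "card (insert \<xi> Z') = Suc n" using Z' by simp
    have "Min Z0 \<le> Max Z0" using fZ0 ne0 by simp
    moreover have "Min Z \<le> Max Z0" using minle calculation by linarith
    ultimately show "insert \<xi> Z' \<subseteq> {Min Z<..<Max Z}"
      using Z'(3) xi lt minle m_def by force
    show "\<forall>z\<in>insert \<xi> Z'. f' z = 0" using Z' fxi by simp
  qed
qed

lemma expsum_zeros:
  "finite B \<Longrightarrow> card B = n \<Longrightarrow> finite Z \<Longrightarrow> n \<le> card Z \<Longrightarrow>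
   (\<forall>z\<in>Z. (\<Sum>\<beta>\<in>B. d \<beta> * exp ((\<beta> - s) * z)) = 0) \<Longrightarrow> \<forall>\<beta>\<in>B. d \<beta> = (0::real)"
proof (induction n arbitrary: B d Z s)
  case 0
  then show ?case by simp
next
  case (Suc n)
  obtain \<beta>0 where b0: "\<beta>0 \<in> B" using Suc.prems(2) by fastforce
  define B' where "B' = B - {\<beta>0}"
  have fB': "finite B'" and cB': "card B' = n" using Suc.prems b0 by (auto simp: B'_def)
  define h where "h = (\<lambda>z. \<Sum>\<beta>\<in>B. d \<beta> * exp ((\<beta> - \<beta>0) * z))"
  define h' where "h' = (\<lambda>z. \<Sum>\<beta>\<in>B. d \<beta> * (\<beta> - \<beta>0) * exp ((\<beta> - \<beta>0) * z))"
  have hz: "h z = exp ((s - \<beta>0) * z) * (\<Sum>\<beta>\<in>B. d \<beta> * exp ((\<beta> - s) * z))" for z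
    unfolding h_def sum_distrib_left
  proof (rule sum.cong)
    fix \<beta> show "d \<beta> * exp ((\<beta> - \<beta>0) * z) = exp ((s - \<beta>0) * z) * (d \<beta> * exp ((\<beta> - s) * z))"
      by (simp add: mult_exp_exp algebra_simps)
  qed simp
  have hzero: "\<forall>z\<in>Z. h z = 0" using hz Suc.prems(5) by simp
  have der: "(h has_real_derivative h' x) (at x)" for x
    unfolding h_def h'_def
    by (auto intro!: derivative_eq_intros simp: algebra_simps)
  obtain Z1 where Z1: "Z1 \<subseteq> Z" "card Z1 = Suc n" "finite Z1"
    using obtain_subset_with_card_n[OF Suc.prems(4)] by blast
  obtain Z' where Z': "finite Z'" "card Z' = n" "\<forall>z\<in>Z'. h' z = 0"
    using rolle_many[of h h', OF der, OF Z1(3) Z1(2)] hzero Z1(1) by blast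
  have h'eq: "h' z = (\<Sum>\<beta>\<in>B'. (d \<beta> * (\<beta> - \<beta>0)) * exp ((\<beta> - \<beta>0) * z))" for z
    unfolding h'_def B'_def using Suc.prems(1) b0 by (simp add: sum.remove)
  have IH: "\<forall>\<beta>\<in>B'. d \<beta> * (\<beta> - \<beta>0) = 0"
    using Suc.IH[OF fB' cB' Z'(1), of "\<lambda>\<beta>. d \<beta> * (\<beta> - \<beta>0)" \<beta>0] Z' h'eq by simp
  have dB': "\<forall>\<beta>\<in>B'. d \<beta> = 0" using IH by (auto simp: B'_def)
  obtain z where z: "z \<in> Z" using Suc.prems(4) by fastforce
  have "(\<Sum>\<beta>\<in>B. d \<beta> * exp ((\<beta> - s) * z)) = d \<beta>0 * exp ((\<beta>0 - s) * z)"
    using Suc.prems(1) b0 dB' by (simp add: sum.remove B'_def)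
  then have "d \<beta>0 = 0" using Suc.prems(5) z by simp
  then show ?case using dB' by (auto simp: B'_def)
qed

lemma expsum_as_sum:
  assumes inj: "inj_on \<alpha> {1..N}" and fB: "finite B" and sub: "\<alpha> ` {1..N} \<subseteq> B"
  shows "expsum N c \<alpha> x = (\<Sum>\<beta>\<in>B. (if \<beta> \<in> \<alpha> ` {1..N} then c (inv_into {1..N} \<alpha> \<beta>) else 0) * exp ((\<beta> - 0) * x))"
proof -
  have "expsum N c \<alpha> x = (\<Sum>\<beta>\<in>\<alpha> ` {1..N}. c (inv_into {1..N} \<alpha> \<beta>) * exp (\<beta> * x))"
    unfolding expsum_def using inj by (simp add: sum.reindex)
  also have "\<dots> = (\<Sum>\<beta>\<in>B. (if \<beta> \<in> \<alpha> ` {1..N} then c (inv_into {1..N} \<alpha> \<beta>) else 0) * exp ((\<beta> - 0) * x))"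
    by (rule sum.mono_neutral_cong_left[OF fB sub]) auto
  finally show ?thesis .
qed

theorem corollary4:
  fixes N :: nat and c \<alpha> c' \<alpha>' :: "nat \<Rightarrow> real" and t :: "nat \<Rightarrow> real"
  assumes "N \<ge> 1"
    and "inj_on \<alpha> {1..N}" and "\<forall>n\<in>{1..N}. \<alpha> n \<noteq> 0" and "\<forall>n\<in>{1..N}. c n \<noteq> 0"
    and "inj_on \<alpha>' {1..N}" and "\<forall>n\<in>{1..N}. \<alpha>' n \<noteq> 0" and "\<forall>n\<in>{1..N}. c' n \<noteq> 0"
    and "inj_on t {1..2*N+1}" and "\<forall>i\<in>{1..2*N+1}. t i \<ge> 0"
    and "\<forall>i\<in>{1..2*N}. expsum N c \<alpha> (t i) = expsum N c' \<alpha>' (t i)"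
    and "\<forall>k\<in>{1..N}. \<forall>i\<in>{1..2*N+1}.
           iter_int k (expsum N c \<alpha>) (t i) = iter_int k (expsum N c' \<alpha>') (t i)"
  shows "\<exists>\<sigma>. bij_betw \<sigma> {1..N} {1..N} \<and> (\<forall>n\<in>{1..N}. c' n = c (\<sigma> n) \<and> \<alpha>' n = \<alpha> (\<sigma> n))"
proof -
  define A where "A = \<alpha> ` {1..N}"
  define A' where "A' = \<alpha>' ` {1..N}"
  define B where "B = A \<union> A'"
  define d where "d = (\<lambda>\<beta>. (if \<beta> \<in> A then c (inv_into {1..N} \<alpha> \<beta>) else 0)
       - (if \<beta> \<in> A' then c' (inv_into {1..N} \<alpha>' \<beta>) else 0))"
  have fB: "finite B" by (simp add: B_def A_def A'_def)
  have cB: "card B \<le> 2 * N"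
  proof -
    have "card B \<le> card A + card A'" unfolding B_def by (rule card_Un_le)
    also have "\<dots> \<le> N + N" unfolding A_def A'_def
      by (metis add_le_mono card_atLeastAtMost card_image_le diff_Suc_1 finite_atLeastAtMost)
    finally show ?thesis by simp
  qed
  define Z where "Z = t ` {1..2*N}"
  have injZ: "inj_on t {1..2*N}" using assms(8) by (rule inj_on_subset) auto
  have fZ: "finite Z" and cZ: "card Z = 2 * N"
    using injZ by (auto simp: Z_def card_image)
  have zero: "\<forall>z\<in>Z. (\<Sum>\<beta>\<in>B. d \<beta> * exp ((\<beta> - 0) * z)) = 0"
  proof
    fix z assume "z \<in> Z"
    then have e: "expsum N c \<alpha> z = expsum N c' \<alpha>' z" using assms(10) by (auto simp: Z_def)
    have "(\<Sum>\<beta>\<in>B. d \<beta> * exp ((\<beta> - 0) * z)) = expsum N c \<alpha> z - expsum N c' \<alpha>' z"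
    proof -
      have s1: "A \<subseteq> B" "A' \<subseteq> B" by (auto simp: B_def)
      show ?thesis
        using expsum_as_sum[OF assms(2) fB s1(1)[unfolded A_def], where c=c and x=z]
          expsum_as_sum[OF assms(5) fB s1(2)[unfolded A'_def], where c=c' and x=z]
        by (simp add: A_def A'_def d_def left_diff_distrib sum_subtractf)
    qed
    then show "(\<Sum>\<beta>\<in>B. d \<beta> * exp ((\<beta> - 0) * z)) = 0" using e by simp
  qed
  have d0: "\<forall>\<beta>\<in>B. d \<beta> = 0"
    using expsum_zeros[OF fB refl fZ _ zero] cB cZ by simp
  define \<sigma> where "\<sigma> = (\<lambda>n. inv_into {1..N} \<alpha> (\<alpha>' n))"
  have key: "\<alpha>' n \<in> A \<and> c' n = c (\<sigma> n) \<and> \<alpha>' n = \<alpha> (\<sigma> n) \<and> \<sigma> n \<in> {1..N}" if n: "n \<in> {1..N}" for n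
  proof -
    have inB: "\<alpha>' n \<in> B" using n by (auto simp: B_def A'_def)
    have ia': "inv_into {1..N} \<alpha>' (\<alpha>' n) = n" using assms(5) n by (simp add: inv_into_f_f)
    have dz: "d (\<alpha>' n) = 0" using d0 inB by blast
    have inA: "\<alpha>' n \<in> A"
    proof (rule ccontr)
      assume "\<alpha>' n \<notin> A"
      then have "d (\<alpha>' n) = - c' n" using n ia' by (simp add: d_def A'_def)
      then show False using dz assms(7) n by simp
    qed
    have "c (\<sigma> n) = c' n" using dz inA n ia' by (simp add: d_def A'_def \<sigma>_def)
    moreover have "\<alpha> (\<sigma> n) = \<alpha>' n" using inA unfolding \<sigma>_def A_def
      by (rule f_inv_into_f)
    moreover have "\<sigma> n \<in> {1..N}" using inA unfolding \<sigma>_def A_def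
      by (rule inv_into_into)
    ultimately show ?thesis using inA by simp
  qed
  have inj\<sigma>: "inj_on \<sigma> {1..N}"
  proof (rule inj_onI)
    fix x y assume "x \<in> {1..N}" "y \<in> {1..N}" "\<sigma> x = \<sigma> y"
    then have "\<alpha>' x = \<alpha>' y" using key by metis
    then show "x = y" using assms(5) \<open>x \<in> {1..N}\<close> \<open>y \<in> {1..N}\<close> by (simp add: inj_on_eq_iff)
  qed
  have img: "\<sigma> ` {1..N} \<subseteq> {1..N}" using key by blast
  have "bij_betw \<sigma> {1..N} {1..N}"
    unfolding bij_betw_def using inj\<sigma> endo_inj_surj[OF _ img inj\<sigma>] by simp
  then show ?thesis using key by blast
qed

end
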